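(* In the binary random graph affiliation mixture model with $Q\ge 2$ groups, for any fixed and known values $\pi_q\in(0,1)$, $1\le q\le Q$, the parameters $\alpha,\beta$ are identifiable from the joint distribution of $K_3$: if $(\alpha,\beta)$ and $(\alpha',\beta')$ together with the same $\boldsymbol\pi$ induce the same law of $K_3$, then $(\alpha,\beta)=(\alpha',\beta')$.
   Context: Random graph mixture model: nodes have i.i.d. latent groups $Z_i\in\{1,\dots,Q\}$ with $\pi_q=\mathbb P(Z_i=q)\in(0,1)$, $\sum_q\pi_q=1$; edge variables $X_{ij}$ ($i<j$) are conditionally independent given all $Z$'s, with law of $X_{ij}$ depending only on $(Z_i,Z_j)$. Binary affiliation model: $X_{ij}\in\{0,1\}$ with $\mathbb P(X_{ij}=1\mid Z_i=q,Z_j=l)=\alpha$ if $q=l$ and $=\beta$ if $q\ne l$. $K_n$ denotes the collection of the $\binom n2$ edge variables among a set of $n$ nodes. *)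

theory Defs
  imports Complex_Main
begin

text \<open>Groups are indexed by 0,...,Q-1 (the paper's 1,...,Q).
  Bernoulli probability of outcome x (True = edge present).\<close>
definition bern :: "real \<Rightarrow> bool \<Rightarrow> real" where
  "bern p x = (if x then p else 1 - p)"

definition affil :: "real \<Rightarrow> real \<Rightarrow> nat \<Rightarrow> nat \<Rightarrow> real" where
  "affil \<alpha> \<beta> q l = (if q = l then \<alpha> else \<beta>)"

definition K3_law :: "nat \<Rightarrow> (nat \<Rightarrow> real) \<Rightarrow> real \<Rightarrow> real \<Rightarrow> bool \<times> bool \<times> bool \<Rightarrow> real" where
  "K3_law Q \<pi> \<alpha> \<beta> x =
     (case x of (x12, x13, x23) \<Rightarrow>
       (\<Sum>q1<Q. \<Sum>q2<Q. \<Sum>q3<Q.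
          \<pi> q1 * \<pi> q2 * \<pi> q3 *
          bern (affil \<alpha> \<beta> q1 q2) x12 *
          bern (affil \<alpha> \<beta> q1 q3) x13 *
          bern (affil \<alpha> \<beta> q2 q3) x23))"

end

theory Submission
  imports Defs
begin

lemma ind_sum: "(\<Sum>k<(Q::nat). (if a = k then f k else 0)) = (if a < Q then f a else (0::real))"
  by (induct Q) auto


lemma inner3:
  assumes "(\<Sum>q<Q. \<pi> q) = 1" "q1 < Q" "q2 < Q"
  shows "(\<Sum>q3<Q. \<pi> q3 * affil \<alpha> \<beta> q1 q3 * affil \<alpha> \<beta> q2 q3)
     = \<beta>^2 + \<beta>*(\<alpha>-\<beta>)*(\<pi> q1 + \<pi> q2) + (\<alpha>-\<beta>)^2 * (if q1 = q2 then \<pi> q1 else 0)"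
proof -
  have "(\<Sum>q3<Q. \<pi> q3 * affil \<alpha> \<beta> q1 q3 * affil \<alpha> \<beta> q2 q3)
    = (\<Sum>q3<Q. \<beta>^2 * \<pi> q3 + \<beta>*(\<alpha>-\<beta>) * (if q1 = q3 then \<pi> q3 else 0)
         + \<beta>*(\<alpha>-\<beta>) * (if q2 = q3 then \<pi> q3 else 0) + (\<alpha>-\<beta>)^2 * (if q1 = q3 then (if q2 = q3 then \<pi> q3 else 0) else 0))"
    by (rule sum.cong) (auto simp: affil_def power2_eq_square algebra_simps)
  also have "\<dots> = \<beta>^2 * (\<Sum>q<Q. \<pi> q) + \<beta>*(\<alpha>-\<beta>)*\<pi> q1 + \<beta>*(\<alpha>-\<beta>)*\<pi> q2 + (\<alpha>-\<beta>)^2 * (if q1 = q2 then \<pi> q1 else 0)"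
    using assms by (simp add: sum.distrib sum_distrib_left[symmetric] ind_sum)
  finally show ?thesis using assms by (simp add: algebra_simps)
qed

lemma inner1:
  assumes "(\<Sum>q<Q. \<pi> q) = 1" "q1 < Q"
  shows "(\<Sum>q2<Q. \<pi> q2 * affil \<alpha> \<beta> q1 q2) = \<beta> + (\<alpha>-\<beta>) * \<pi> q1"
proof -
  have "(\<Sum>q2<Q. \<pi> q2 * affil \<alpha> \<beta> q1 q2) = (\<Sum>q2<Q. \<beta> * \<pi> q2 + (\<alpha>-\<beta>) * (if q1 = q2 then \<pi> q2 else 0))"
    by (rule sum.cong) (auto simp: affil_def algebra_simps)
  also have "\<dots> = \<beta> * (\<Sum>q<Q. \<pi> q) + (\<alpha>-\<beta>) * \<pi> q1"
    using assms by (simp add: sum.distrib sum_distrib_left[symmetric] ind_sum)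
  finally show ?thesis using assms by simp
qed

lemma inner2:
  assumes "(\<Sum>q<Q. \<pi> q) = 1" "q1 < Q"
  shows "(\<Sum>q2<Q. \<pi> q2 * affil \<alpha> \<beta> q1 q2 *
     (\<beta>^2 + \<beta>*(\<alpha>-\<beta>)*(\<pi> q1 + \<pi> q2) + (\<alpha>-\<beta>)^2 * (if q1 = q2 then \<pi> q1 else 0)))
   = \<beta>^3 + \<beta>^2*(\<alpha>-\<beta>)*\<pi> q1 + \<beta>^2*(\<alpha>-\<beta>)*(\<Sum>q<Q. \<pi> q^2)
     + \<pi> q1 * ((\<alpha>-\<beta>)*\<beta>^2 + 3*\<beta>*(\<alpha>-\<beta>)^2*\<pi> q1 + (\<alpha>-\<beta>)^3*\<pi> q1)"
proof -
  let ?d = "\<alpha>-\<beta>"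
  have "(\<Sum>q2<Q. \<pi> q2 * affil \<alpha> \<beta> q1 q2 *
     (\<beta>^2 + \<beta>*(\<alpha>-\<beta>)*(\<pi> q1 + \<pi> q2) + (\<alpha>-\<beta>)^2 * (if q1 = q2 then \<pi> q1 else 0)))
    = (\<Sum>q2<Q. \<beta>^3 * \<pi> q2 + (\<beta>^2*?d*\<pi> q1) * \<pi> q2 + \<beta>^2*?d * \<pi> q2^2
        + (if q1 = q2 then \<pi> q2 * (?d*\<beta>^2 + 3*\<beta>*?d^2*\<pi> q1 + ?d^3*\<pi> q1) else 0))"
    by (rule sum.cong) (auto simp: affil_def power2_eq_square power3_eq_cube algebra_simps)
  also have "\<dots> = \<beta>^3 * (\<Sum>q<Q. \<pi> q) + (\<beta>^2*?d*\<pi> q1) * (\<Sum>q<Q. \<pi> q) + \<beta>^2*?d*(\<Sum>q<Q. \<pi> q^2)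
      + \<pi> q1 * (?d*\<beta>^2 + 3*\<beta>*?d^2*\<pi> q1 + ?d^3*\<pi> q1)"
    using assms by (simp add: sum.distrib sum_distrib_left[symmetric] ind_sum)
  finally show ?thesis using assms by (simp add: algebra_simps)
qed

lemma pairsum: "K3_law Q \<pi> \<alpha> \<beta> (x,y,True) + K3_law Q \<pi> \<alpha> \<beta> (x,y,False) =
  (\<Sum>q1<Q. \<Sum>q2<Q. \<Sum>q3<Q. \<pi> q1 * \<pi> q2 * \<pi> q3 *
          bern (affil \<alpha> \<beta> q1 q2) x * bern (affil \<alpha> \<beta> q1 q3) y)"
  unfolding K3_law_def by (simp add: sum.distrib[symmetric] bern_def algebra_simps)

lemma m2_law: "K3_law Q \<pi> \<alpha> \<beta> (True,True,True) + K3_law Q \<pi> \<alpha> \<beta> (True,True,False) =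
   (\<Sum>q1<Q. \<pi> q1 * ((\<Sum>q2<Q. \<pi> q2 * affil \<alpha> \<beta> q1 q2) * (\<Sum>q3<Q. \<pi> q3 * affil \<alpha> \<beta> q1 q3)))"
  unfolding pairsum by (simp add: bern_def sum_distrib_left sum_distrib_right mult_ac)

lemma m1_law: "K3_law Q \<pi> \<alpha> \<beta> (True,True,True) + K3_law Q \<pi> \<alpha> \<beta> (True,True,False)
   + (K3_law Q \<pi> \<alpha> \<beta> (True,False,True) + K3_law Q \<pi> \<alpha> \<beta> (True,False,False)) =
   (\<Sum>q1<Q. \<pi> q1 * ((\<Sum>q2<Q. \<pi> q2 * affil \<alpha> \<beta> q1 q2) * (\<Sum>q3<Q. \<pi> q3)))"
  unfolding pairsum by (simp add: bern_def sum_distrib_left sum_distrib_right sum.distrib[symmetric] algebra_simps)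

lemma TTT_law: "K3_law Q \<pi> \<alpha> \<beta> (True,True,True) =
   (\<Sum>q1<Q. \<pi> q1 * (\<Sum>q2<Q. \<pi> q2 * affil \<alpha> \<beta> q1 q2 * (\<Sum>q3<Q. \<pi> q3 * affil \<alpha> \<beta> q1 q3 * affil \<alpha> \<beta> q2 q3)))"
  unfolding K3_law_def by (simp add: bern_def sum_distrib_left mult_ac)

lemma moments:
  assumes "(\<Sum>q<Q. \<pi> q) = 1"
  defines "s2 \<equiv> (\<Sum>q<Q. \<pi> q^2)" and "s3 \<equiv> (\<Sum>q<Q. \<pi> q^3)"
  shows "K3_law Q \<pi> \<alpha> \<beta> (True,True,True) + K3_law Q \<pi> \<alpha> \<beta> (True,True,False)
   + (K3_law Q \<pi> \<alpha> \<beta> (True,False,True) + K3_law Q \<pi> \<alpha> \<beta> (True,False,False)) = \<beta> + (\<alpha>-\<beta>)*s2"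
    and "K3_law Q \<pi> \<alpha> \<beta> (True,True,True) + K3_law Q \<pi> \<alpha> \<beta> (True,True,False)
     = \<beta>^2 + 2*\<beta>*(\<alpha>-\<beta>)*s2 + (\<alpha>-\<beta>)^2*s3"
    and "K3_law Q \<pi> \<alpha> \<beta> (True,True,True) = \<beta>^3 + 3*\<beta>^2*(\<alpha>-\<beta>)*s2 + 3*\<beta>*(\<alpha>-\<beta>)^2*s3 + (\<alpha>-\<beta>)^3*s3"
proof -
  let ?d = "\<alpha>-\<beta>"
  have "(\<Sum>q1<Q. \<pi> q1 * ((\<Sum>q2<Q. \<pi> q2 * affil \<alpha> \<beta> q1 q2) * (\<Sum>q3<Q. \<pi> q3)))
      = (\<Sum>q1<Q. \<beta> * \<pi> q1 + ?d * \<pi> q1^2)"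
    using assms(1) by (intro sum.cong refl) (simp add: inner1 power2_eq_square algebra_simps)
  also have "\<dots> = \<beta> + ?d*s2" using assms(1) by (simp add: s2_def sum.distrib sum_distrib_left[symmetric])
  finally show "K3_law Q \<pi> \<alpha> \<beta> (True,True,True) + K3_law Q \<pi> \<alpha> \<beta> (True,True,False)
   + (K3_law Q \<pi> \<alpha> \<beta> (True,False,True) + K3_law Q \<pi> \<alpha> \<beta> (True,False,False)) = \<beta> + (\<alpha>-\<beta>)*s2"
    unfolding m1_law .
  have "(\<Sum>q1<Q. \<pi> q1 * ((\<Sum>q2<Q. \<pi> q2 * affil \<alpha> \<beta> q1 q2) * (\<Sum>q3<Q. \<pi> q3 * affil \<alpha> \<beta> q1 q3)))
      = (\<Sum>q1<Q. \<beta>^2 * \<pi> q1 + 2*\<beta>*?d * \<pi> q1^2 + ?d^2 * \<pi> q1^3)"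
    using assms(1) by (intro sum.cong refl) (simp add: inner1 power2_eq_square power3_eq_cube algebra_simps)
  also have "\<dots> = \<beta>^2 + 2*\<beta>*?d*s2 + ?d^2*s3" using assms(1)
    by (simp add: s2_def s3_def sum.distrib sum_distrib_left[symmetric])
  finally show "K3_law Q \<pi> \<alpha> \<beta> (True,True,True) + K3_law Q \<pi> \<alpha> \<beta> (True,True,False)
     = \<beta>^2 + 2*\<beta>*(\<alpha>-\<beta>)*s2 + (\<alpha>-\<beta>)^2*s3"
    unfolding m2_law .
  have "(\<Sum>q1<Q. \<pi> q1 * (\<Sum>q2<Q. \<pi> q2 * affil \<alpha> \<beta> q1 q2 * (\<Sum>q3<Q. \<pi> q3 * affil \<alpha> \<beta> q1 q3 * affil \<alpha> \<beta> q2 q3)))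
     = (\<Sum>q1<Q. \<pi> q1 * (\<Sum>q2<Q. \<pi> q2 * affil \<alpha> \<beta> q1 q2 *
     (\<beta>^2 + \<beta>*(\<alpha>-\<beta>)*(\<pi> q1 + \<pi> q2) + (\<alpha>-\<beta>)^2 * (if q1 = q2 then \<pi> q1 else 0))))"
    using assms(1) by (intro sum.cong refl arg_cong2[where f="(*)"]) (simp_all add: inner3)
  also have "\<dots> = (\<Sum>q1<Q. \<beta>^3 * \<pi> q1 + \<beta>^2*?d*s2 * \<pi> q1 + (2*\<beta>^2*?d) * \<pi> q1^2 + (3*\<beta>*?d^2 + ?d^3) * \<pi> q1^3)"
  proof (intro sum.cong refl)
    fix q1 assume "q1 \<in> {..<Q}"
    hence q1: "q1 < Q" by simp
    show "\<pi> q1 * (\<Sum>q2<Q. \<pi> q2 * affil \<alpha> \<beta> q1 q2 *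
     (\<beta>^2 + \<beta>*(\<alpha>-\<beta>)*(\<pi> q1 + \<pi> q2) + (\<alpha>-\<beta>)^2 * (if q1 = q2 then \<pi> q1 else 0)))
      = \<beta>^3 * \<pi> q1 + \<beta>^2*?d*s2 * \<pi> q1 + (2*\<beta>^2*?d) * \<pi> q1^2 + (3*\<beta>*?d^2 + ?d^3) * \<pi> q1^3"
      unfolding inner2[OF assms(1) q1] s2_def by (simp add: power2_eq_square power3_eq_cube algebra_simps)
  qed
  also have "\<dots> = \<beta>^3*(\<Sum>q<Q. \<pi> q) + \<beta>^2*?d*s2*(\<Sum>q<Q. \<pi> q) + (2*\<beta>^2*?d)*s2 + (3*\<beta>*?d^2 + ?d^3)*s3"
    by (simp only: sum.distrib sum_distrib_left[symmetric] s2_def s3_def)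
  also have "\<dots> = \<beta>^3 + 3*\<beta>^2*?d*s2 + 3*\<beta>*?d^2*s3 + ?d^3*s3" using assms(1)
    by (simp add: algebra_simps)
  finally show "K3_law Q \<pi> \<alpha> \<beta> (True,True,True) = \<beta>^3 + 3*\<beta>^2*(\<alpha>-\<beta>)*s2 + 3*\<beta>*(\<alpha>-\<beta>)^2*s3 + (\<alpha>-\<beta>)^3*s3"
    unfolding TTT_law .
qed

lemma W_pos:
  fixes Q :: nat
  assumes "Q \<ge> 2" "\<forall>q<Q. 0 < \<pi> q \<and> \<pi> q < 1" "(\<Sum>q<Q. \<pi> q) = 1"
  defines "s2 \<equiv> (\<Sum>q<Q. \<pi> q^2)" and "s3 \<equiv> (\<Sum>q<Q. \<pi> q^3)"
  shows "s3 - 3*s2*s3 + 2*s2^3 > (0::real)"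
proof -
  have s3pos: "s3 > 0" unfolding s3_def using assms(1,2) by (intro sum_pos) (auto simp: lessThan_empty_iff)
  have s2lt: "s2 < 1"
  proof -
    have "s2 < (\<Sum>q<Q. \<pi> q)" unfolding s2_def
    proof (rule sum_strict_mono)
      show "finite {..<Q}" by simp
      have "0 \<in> {..<Q}" using assms(1) by simp
      thus "{..<Q} \<noteq> {}" by blast
      fix q assume "q \<in> {..<Q}"
      hence "0 < \<pi> q" "\<pi> q < 1" using assms(2) by auto
      thus "\<pi> q^2 < \<pi> q" by (simp add: power2_eq_square)
    qed
    thus ?thesis using assms(3) by simp
  qed
  have s2nn: "s2 \<ge> 0" unfolding s2_def by (intro sum_nonneg) auto
  define u where "u = sqrt s2"
  have u: "u \<ge> 0" "u^2 = s2" "u < 1" using s2nn s2lt by (auto simp: u_def)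
  have le: "\<pi> q \<le> u" if "q < Q" for q
  proof -
    have "\<pi> q^2 \<le> s2" unfolding s2_def
      using that by (intro member_le_sum) auto
    thus ?thesis unfolding u_def using assms(2) that by (simp add: real_le_rsqrt)
  qed
  have "s3 \<le> (\<Sum>q<Q. \<pi> q^2 * u)" unfolding s3_def
    using le assms(2) by (intro sum_mono) (auto simp: power3_eq_cube power2_eq_square intro!: mult_left_mono)
  hence s3le: "s3 \<le> s2 * u" by (simp add: s2_def sum_distrib_right)
  have eq: "s3 - 3*s2*s3 + 2*s2^3 = s3*(1-3*s2) + 2*s2^3" by (simp add: algebra_simps)
  show ?thesis
  proof (cases "3*s2 - 1 \<le> 0")
    case True
    have A: "s3 * (1 - 3*s2) \<ge> 0" using True s3pos by simp
    show ?thesis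
    proof (cases "s2 = 0")
      case True thus ?thesis using s3pos by simp
    next
      case False
      hence "s2^3 > 0" using s2nn by simp
      thus ?thesis using A eq by linarith
    qed
  next
    case False
    have A: "s3 * (3*s2 - 1) \<le> s2 * u * (3*s2-1)" using s3le False by (intro mult_right_mono) auto
    have B: "s2 * u * (3*s2-1) < 2*s2^3"
    proof -
      have "(u-1)^2*(2*u+1) > 0" using u by (intro mult_pos_pos) auto
      hence "3*u^2 - 1 < 2*u^3" by (simp add: power2_eq_square power3_eq_cube algebra_simps)
      moreover have "s2 * u > 0"
      proof -
        have s2p: "s2 > 0" using False by simp
        hence "u > 0" unfolding u_def by simp
        thus ?thesis using s2p by simp
      qed
      ultimately have "s2*u*(3*u^2-1) < s2*u*(2*u^3)" by (intro mult_strict_left_mono) auto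
      moreover have "s2*u*(2*u^3) = 2*s2^3" using u(2) by (simp add: power2_eq_square power3_eq_cube algebra_simps flip: u(2))
      moreover have "s2*u*(3*u^2-1) = s2 * u * (3*s2-1)" using u(2) by simp
      ultimately show ?thesis by simp
    qed
    have C: "s3*(1-3*s2) + 2*s2^3 = 2*s2^3 - s3*(3*s2-1)" by (simp add: algebra_simps)
    show ?thesis unfolding eq C using A B by linarith
  qed
qed

lemma cube_inj: "(x::real)^3 = y^3 \<Longrightarrow> x = y"
  by (metis odd_real_root_unique odd_numeral real_root_power_cancel)

theorem corollary2:
  fixes Q :: nat and \<pi> :: "nat \<Rightarrow> real" and \<alpha> \<beta> \<alpha>' \<beta>' :: real
  assumes "Q \<ge> 2"
    and "\<forall>q<Q. 0 < \<pi> q \<and> \<pi> q < 1"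
    and "(\<Sum>q<Q. \<pi> q) = 1"
    and "0 \<le> \<alpha>" "\<alpha> \<le> 1" "0 \<le> \<beta>" "\<beta> \<le> 1"
    and "0 \<le> \<alpha>'" "\<alpha>' \<le> 1" "0 \<le> \<beta>'" "\<beta>' \<le> 1"
    and "K3_law Q \<pi> \<alpha> \<beta> = K3_law Q \<pi> \<alpha>' \<beta>'"
  shows "\<alpha> = \<alpha>' \<and> \<beta> = \<beta>'"
proof -
  define s2 where "s2 = (\<Sum>q<Q. \<pi> q^2)"
  define s3 where "s3 = (\<Sum>q<Q. \<pi> q^3)"
  define W where "W = s3 - 3*s2*s3 + 2*s2^3"
  have W: "W > 0" unfolding W_def s2_def s3_def using W_pos assms(1-3) by blast
  note M = moments[OF assms(3), of \<alpha> \<beta>, folded s2_def s3_def]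
  note M' = moments[OF assms(3), of \<alpha>' \<beta>', folded s2_def s3_def]
  have e1: "\<beta> + (\<alpha>-\<beta>)*s2 = \<beta>' + (\<alpha>'-\<beta>')*s2" using M(1) M'(1) assms(12) by simp
  have e2: "\<beta>^2 + 2*\<beta>*(\<alpha>-\<beta>)*s2 + (\<alpha>-\<beta>)^2*s3 = \<beta>'^2 + 2*\<beta>'*(\<alpha>'-\<beta>')*s2 + (\<alpha>'-\<beta>')^2*s3"
    using M(2) M'(2) assms(12) by simp
  have e3: "\<beta>^3 + 3*\<beta>^2*(\<alpha>-\<beta>)*s2 + 3*\<beta>*(\<alpha>-\<beta>)^2*s3 + (\<alpha>-\<beta>)^3*s3
     = \<beta>'^3 + 3*\<beta>'^2*(\<alpha>'-\<beta>')*s2 + 3*\<beta>'*(\<alpha>'-\<beta>')^2*s3 + (\<alpha>'-\<beta>')^3*s3"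
    using M(3) M'(3) assms(12) by simp
  have key: "\<And>b d. (b^3 + 3*b^2*d*s2 + 3*b*d^2*s3 + d^3*s3) - 3*(b + d*s2)*(b^2 + 2*b*d*s2 + d^2*s3)
      + 2*(b + d*s2)^3 = d^3 * W"
    unfolding W_def by (simp add: power2_eq_square power3_eq_cube algebra_simps)
  have "(\<alpha>-\<beta>)^3 * W = (\<beta>^3 + 3*\<beta>^2*(\<alpha>-\<beta>)*s2 + 3*\<beta>*(\<alpha>-\<beta>)^2*s3 + (\<alpha>-\<beta>)^3*s3)
      - 3*(\<beta> + (\<alpha>-\<beta>)*s2)*(\<beta>^2 + 2*\<beta>*(\<alpha>-\<beta>)*s2 + (\<alpha>-\<beta>)^2*s3) + 2*(\<beta> + (\<alpha>-\<beta>)*s2)^3"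
    by (rule key[symmetric])
  also have "\<dots> = (\<beta>'^3 + 3*\<beta>'^2*(\<alpha>'-\<beta>')*s2 + 3*\<beta>'*(\<alpha>'-\<beta>')^2*s3 + (\<alpha>'-\<beta>')^3*s3)
      - 3*(\<beta>' + (\<alpha>'-\<beta>')*s2)*(\<beta>'^2 + 2*\<beta>'*(\<alpha>'-\<beta>')*s2 + (\<alpha>'-\<beta>')^2*s3) + 2*(\<beta>' + (\<alpha>'-\<beta>')*s2)^3"
    by (simp only: e1 e2 e3)
  also have "\<dots> = (\<alpha>'-\<beta>')^3 * W" by (rule key)
  finally have "(\<alpha>-\<beta>)^3 * W = (\<alpha>'-\<beta>')^3 * W" .
  hence "(\<alpha>-\<beta>)^3 = (\<alpha>'-\<beta>')^3" using W by simp
  hence d: "\<alpha>-\<beta> = \<alpha>'-\<beta>'" by (rule cube_inj)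
  hence "\<beta> = \<beta>'" using e1 by simp
  with d show ?thesis by simp
qed

end
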